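(* In the setting described in the context, for $n\ge1$ let $u_n=\min\{x\in[d,v]: f^{2n}(x)=d\}$; for $n,k\ge1$ let $u'_{n,k}=\max\{x\in[u_{n+1},u_n]: f^{2n+2k}(x)=d\}$; and for $n,k,i\ge1$ let $u_{n,k,i}=\min\{x\in[u'_{n,k},u'_{n,k+1}]: f^{2n+2k+2i}(x)=d\}$ (these sets are nonempty). Then for each $n\ge1$, $k\ge1$, $i\ge1$, on the interval $[u'_{n,k},u_{n,k,i}]$ the map $f$ has no periodic points whose least period is odd and $\le 2n+2k+2i+1$, and no periodic points whose least period is even and $\le 2n+2k+2i$ except points of least period $2n+2k+2i$ and possibly points of least period $2n+2k$ or $2n$.
   Context: Let $I$ be a compact interval and $f:I\to I$ continuous; $f^1=f$, $f^n=f\circ f^{n-1}$. A point $x_0$ is a periodic point of least period $k$ (a period-$k$ point) if $f^k(x_0)=x_0$ and $f^i(x_0)\ne x_0$ for $0<i<k$. Let $m\ge3$ be odd and let $P$ be a periodic orbit of $f$ of least period $m$. Put $e=f^{m-1}(\min P)$. Let $v\in[\min P,e)$ be a point with $f(v)=e$, and let $z\in(v,e)$ be a fixed point of $f$ (such points exist). Define $z_0=\min\{x\in[v,z]: f^2(x)=x\}$ and $d=\max\{x\in[\min P,v]: f^2(x)=z_0\}$ (both sets are nonempty). *)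

theory Defs
  imports "HOL-Analysis.Analysis"
begin

definition least_period_point :: "(real \<Rightarrow> real) \<Rightarrow> nat \<Rightarrow> real \<Rightarrow> bool" where
  "least_period_point f k x \<longleftrightarrow> k > 0 \<and> (f ^^ k) x = x \<and> (\<forall>i. 0 < i \<and> i < k \<longrightarrow> (f ^^ i) x \<noteq> x)"

definition periodic_orbit :: "(real \<Rightarrow> real) \<Rightarrow> nat \<Rightarrow> real set \<Rightarrow> bool" where
  "periodic_orbit f m P \<longleftrightarrow> (\<exists>x0. least_period_point f m x0 \<and> P = (\<lambda>i. (f ^^ i) x0) ` {..<m})"

end

theory Submission
  imports Defs
begin

lemma Least_real_closed:
  fixes Q :: "real \<Rightarrow> bool"
  assumes cl: "closed {x. Q x}" and q: "Q y0" and lb: "\<And>x. Q x \<Longrightarrow> \<alpha> \<le> x"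
  shows "Q (LEAST x. Q x) \<and> (\<forall>y. Q y \<longrightarrow> (LEAST x. Q x) \<le> y)"
proof -
  have bb: "bdd_below {x. Q x}" by (rule bdd_belowI[of _ \<alpha>]) (simp add: lb)
  have ne: "{x. Q x} \<noteq> {}" using q by blast
  have i1: "Inf {x. Q x} \<in> {x. Q x}" by (rule closed_contains_Inf[OF ne bb cl])
  have i2: "\<forall>y. Q y \<longrightarrow> Inf {x. Q x} \<le> y"
  proof (intro allI impI)
    fix y assume "Q y" then show "Inf {x. Q x} \<le> y" using cInf_lower[OF _ bb, of y] by simp
  qed
  have "(LEAST x. Q x) = Inf {x. Q x}"
    by (rule Least_equality) (use i1 i2 in simp_all)
  with i1 i2 show ?thesis by simp
qed

lemma Greatest_real_closed:
  fixes Q :: "real \<Rightarrow> bool"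
  assumes cl: "closed {x. Q x}" and q: "Q y0" and ub: "\<And>x. Q x \<Longrightarrow> x \<le> \<beta>"
  shows "Q (GREATEST x. Q x) \<and> (\<forall>y. Q y \<longrightarrow> y \<le> (GREATEST x. Q x))"
proof -
  have bb: "bdd_above {x. Q x}" by (rule bdd_aboveI[of _ \<beta>]) (simp add: ub)
  have ne: "{x. Q x} \<noteq> {}" using q by blast
  have i1: "Sup {x. Q x} \<in> {x. Q x}" by (rule closed_contains_Sup[OF ne bb cl])
  have i2: "\<forall>y. Q y \<longrightarrow> y \<le> Sup {x. Q x}"
  proof (intro allI impI)
    fix y assume "Q y" then show "y \<le> Sup {x. Q x}" using cSup_upper[OF _ bb, of y] by simp
  qed
  have "(GREATEST x. Q x) = Sup {x. Q x}"
    by (rule Greatest_equality) (use i1 i2 in simp_all)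
  with i1 i2 show ?thesis by simp
qed

lemma least_iv:
  fixes h :: "real \<Rightarrow> real"
  assumes "continuous_on {\<alpha>..\<beta>} h" "y0 \<in> {\<alpha>..\<beta>}" "h y0 = c"
  shows "(LEAST x. x \<in> {\<alpha>..\<beta>} \<and> h x = c) \<in> {\<alpha>..\<beta>} \<and> h (LEAST x. x \<in> {\<alpha>..\<beta>} \<and> h x = c) = c \<and>
    (\<forall>y\<in>{\<alpha>..\<beta>}. h y = c \<longrightarrow> (LEAST x. x \<in> {\<alpha>..\<beta>} \<and> h x = c) \<le> y)"
proof -
  have cl: "closed {x. x \<in> {\<alpha>..\<beta>} \<and> h x = c}"
    by (rule continuous_closed_preimage_constant[OF assms(1) closed_atLeastAtMost])
  have q: "y0 \<in> {\<alpha>..\<beta>} \<and> h y0 = c" using assms(2,3) by blast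
  have lb: "\<And>x. x \<in> {\<alpha>..\<beta>} \<and> h x = c \<Longrightarrow> \<alpha> \<le> x" by simp
  from Least_real_closed[OF cl q lb] show ?thesis by blast
qed

lemma greatest_iv:
  fixes h :: "real \<Rightarrow> real"
  assumes "continuous_on {\<alpha>..\<beta>} h" "y0 \<in> {\<alpha>..\<beta>}" "h y0 = c"
  shows "(GREATEST x. x \<in> {\<alpha>..\<beta>} \<and> h x = c) \<in> {\<alpha>..\<beta>} \<and> h (GREATEST x. x \<in> {\<alpha>..\<beta>} \<and> h x = c) = c \<and>
    (\<forall>y\<in>{\<alpha>..\<beta>}. h y = c \<longrightarrow> y \<le> (GREATEST x. x \<in> {\<alpha>..\<beta>} \<and> h x = c))"
proof -
  have cl: "closed {x. x \<in> {\<alpha>..\<beta>} \<and> h x = c}"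
    by (rule continuous_closed_preimage_constant[OF assms(1) closed_atLeastAtMost])
  have q: "y0 \<in> {\<alpha>..\<beta>} \<and> h y0 = c" using assms(2,3) by blast
  have ub: "\<And>x. x \<in> {\<alpha>..\<beta>} \<and> h x = c \<Longrightarrow> x \<le> \<beta>" by simp
  from Greatest_real_closed[OF cl q ub] show ?thesis by blast
qed

lemma least_fix:
  fixes h :: "real \<Rightarrow> real"
  assumes "continuous_on {\<alpha>..\<beta>} h" "y0 \<in> {\<alpha>..\<beta>}" "h y0 = y0"
  shows "(LEAST x. x \<in> {\<alpha>..\<beta>} \<and> h x = x) \<in> {\<alpha>..\<beta>} \<and> h (LEAST x. x \<in> {\<alpha>..\<beta>} \<and> h x = x) = (LEAST x. x \<in> {\<alpha>..\<beta>} \<and> h x = x) \<and>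
    (\<forall>y\<in>{\<alpha>..\<beta>}. h y = y \<longrightarrow> (LEAST x. x \<in> {\<alpha>..\<beta>} \<and> h x = x) \<le> y)"
proof -
  have c: "continuous_on {\<alpha>..\<beta>} (\<lambda>x. h x - x)"
    using assms(1) by (intro continuous_intros)
  have cl0: "closed {x \<in> {\<alpha>..\<beta>}. h x - x = 0}"
    by (rule continuous_closed_preimage_constant[OF c closed_atLeastAtMost])
  have "{x \<in> {\<alpha>..\<beta>}. h x - x = 0} = {x. x \<in> {\<alpha>..\<beta>} \<and> h x = x}" by auto
  with cl0 have cl: "closed {x. x \<in> {\<alpha>..\<beta>} \<and> h x = x}" by simp
  have q: "y0 \<in> {\<alpha>..\<beta>} \<and> h y0 = y0" using assms(2,3) by blast
  have lb: "\<And>x. x \<in> {\<alpha>..\<beta>} \<and> h x = x \<Longrightarrow> \<alpha> \<le> x" by simp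
  from Least_real_closed[OF cl q lb] show ?thesis by blast
qed

lemma ivt:
  fixes h :: "real \<Rightarrow> real"
  assumes "continuous_on {\<alpha>..\<beta>} h" "\<alpha> \<le> \<beta>"
    "(h \<alpha> \<le> c \<and> c \<le> h \<beta>) \<or> (h \<beta> \<le> c \<and> c \<le> h \<alpha>)"
  shows "\<exists>y\<in>{\<alpha>..\<beta>}. h y = c"
proof -
  from assms(3) have "\<exists>x. \<alpha> \<le> x \<and> x \<le> \<beta> \<and> h x = c"
  proof
    assume "h \<alpha> \<le> c \<and> c \<le> h \<beta>" then show ?thesis using IVT'[of h \<alpha> c \<beta>] assms(1,2) by blast
  next
    assume "h \<beta> \<le> c \<and> c \<le> h \<alpha>" then show ?thesis using IVT2'[of h \<beta> c \<alpha>] assms(1,2) by blast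
  qed
  then show ?thesis by auto
qed

lemma iter_maps:
  assumes "f ` {a..b} \<subseteq> {a..b}" "x \<in> {a..b}"
  shows "(f ^^ n) x \<in> {a..(b::real)}"
proof (induction n)
  case 0 then show ?case using assms by simp
next
  case (Suc n) then show ?case using assms(1) by (simp add: image_subset_iff)
qed

lemma iter_cont:
  assumes "continuous_on {a..b} f" "f ` {a..b} \<subseteq> {a..(b::real)}"
  shows "continuous_on {a..b} (f ^^ n)"
proof (induction n)
  case 0 then show ?case by (simp add: continuous_on_id)
next
  case (Suc n)
  have "(f ^^ n) ` {a..b} \<subseteq> {a..b}" using iter_maps[OF assms(2)] by auto
  then have "continuous_on ((f ^^ n) ` {a..b}) f" by (rule continuous_on_subset[OF assms(1)])
  then have "continuous_on {a..b} (f \<circ> (f ^^ n))" by (rule continuous_on_compose[OF Suc])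
  moreover have "f ^^ Suc n = f \<circ> (f ^^ n)" by (rule funpow.simps(2))
  ultimately show ?case by (simp only:)
qed


lemma funpow_mod:
  assumes "(f ^^ m) x0 = x0"
  shows "(f ^^ n) x0 = (f ^^ (n mod m)) x0"
proof -
  have k: "(f ^^ (m * q)) x0 = x0" for q
  proof (induction q)
    case 0 then show ?case by simp
  next
    case (Suc q)
    have "(f ^^ (m * Suc q)) x0 = (f ^^ m) ((f ^^ (m * q)) x0)"
      by (simp add: funpow_add algebra_simps)
    then show ?case using Suc assms by simp
  qed
  have "n = n mod m + m * (n div m)" by simp
  then have "(f ^^ n) x0 = (f ^^ (n mod m)) ((f ^^ (m * (n div m))) x0)"
    by (metis comp_apply funpow_add)
  then show ?thesis using k by simp
qed

locale L =
  fixes f :: "real \<Rightarrow> real" and a b :: real and m :: nat and P :: "real set" and v z e z0 d :: real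
    and u :: "nat \<Rightarrow> real" and u' :: "nat \<Rightarrow> nat \<Rightarrow> real" and uu :: "nat \<Rightarrow> nat \<Rightarrow> nat \<Rightarrow> real"
  assumes ab: "a \<le> b" and cont: "continuous_on {a..b} f" and maps: "f ` {a..b} \<subseteq> {a..b}"
    and m3: "m \<ge> 3" and modd: "odd m" and orb: "periodic_orbit f m P" and PI: "P \<subseteq> {a..b}"
    and e_def: "e = (f ^^ (m - 1)) (Min P)"
    and v: "v \<in> {Min P..<e}" and fv: "f v = e" and z: "z \<in> {v<..<e}" and fz: "f z = z"
    and z0_def: "z0 = (LEAST x. x \<in> {v..z} \<and> (f ^^ 2) x = x)"
    and d_def: "d = (GREATEST x. x \<in> {Min P..v} \<and> (f ^^ 2) x = z0)"
    and u_def: "u = (\<lambda>n::nat. LEAST x. x \<in> {d..v} \<and> (f ^^ (2 * n)) x = d)"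
    and u'_def: "u' = (\<lambda>n k::nat. GREATEST x. x \<in> {u (n + 1)..u n} \<and> (f ^^ (2 * n + 2 * k)) x = d)"
    and uu_def: "uu = (\<lambda>n k i::nat. LEAST x. x \<in> {u' n k..u' n (k + 1)} \<and>
                                   (f ^^ (2 * n + 2 * k + 2 * i)) x = d)"
begin

definition G :: "nat \<Rightarrow> real \<Rightarrow> real" where "G n = f ^^ (2 * n)"

lemma G0: "G 0 x = x" by (simp add: G_def)

lemma GG: "G p (G q x) = G (p + q) x"
  by (simp add: G_def funpow_add algebra_simps)

lemma Gsplit: "s \<le> t \<Longrightarrow> G t x = G (t - s) (G s x)"
  using GG[of "t - s" s x] by simp

lemma G1: "G 1 x = f (f x)" "G (Suc 0) x = f (f x)"
  by (simp_all add: G_def numeral_2_eq_2)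

lemma Gmaps: "x \<in> {a..b} \<Longrightarrow> G n x \<in> {a..b}"
  unfolding G_def using iter_maps[OF maps] by blast

lemma Gc: "a \<le> \<alpha> \<Longrightarrow> \<beta> \<le> b \<Longrightarrow> continuous_on {\<alpha>..\<beta>} (G n)"
  unfolding G_def
  by (rule continuous_on_subset[OF iter_cont[OF cont maps]]) auto

lemma P_facts: "finite P" "P \<noteq> {}" "Min P \<in> P" "\<And>y. y \<in> P \<Longrightarrow> Min P \<le> y"
    "\<And>y. y \<in> P \<Longrightarrow> f y \<in> P" "f e = Min P" "f (f (Min P)) \<noteq> Min P"
proof -
  obtain x0 where lp: "least_period_point f m x0" and Pd: "P = (\<lambda>i. (f ^^ i) x0) ` {..<m}"
    using orb unfolding periodic_orbit_def by blast
  have fm: "(f ^^ m) x0 = x0" and nper: "\<And>i. 0 < i \<Longrightarrow> i < m \<Longrightarrow> (f ^^ i) x0 \<noteq> x0"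
    using lp unfolding least_period_point_def by auto
  show fin: "finite P" using Pd by simp
  have "(f ^^ 0) x0 \<in> P" unfolding Pd using m3 by (intro imageI) simp
  then show ne: "P \<noteq> {}" by blast
  show mP: "Min P \<in> P" using fin ne by simp
  show "\<And>y. y \<in> P \<Longrightarrow> Min P \<le> y" using fin by simp
  show "\<And>y. y \<in> P \<Longrightarrow> f y \<in> P"
  proof -
    fix y assume "y \<in> P"
    then obtain i where i: "i < m" "y = (f ^^ i) x0" using Pd by auto
    have "f y = (f ^^ (Suc i)) x0" using i by simp
    also have "\<dots> = (f ^^ (Suc i mod m)) x0" by (rule funpow_mod[OF fm])
    finally show "f y \<in> P" using Pd m3 by auto
  qed
  obtain j where j: "j < m" "Min P = (f ^^ j) x0" using mP Pd by auto
  have fmP: "(f ^^ m) (Min P) = Min P"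
  proof -
    have "(f ^^ m) (Min P) = (f ^^ (m + j)) x0" using j by (simp add: funpow_add)
    also have "\<dots> = (f ^^ (j + m)) x0" by (simp add: add.commute)
    also have "\<dots> = (f ^^ j) ((f ^^ m) x0)" by (simp add: funpow_add)
    finally show ?thesis using fm j by simp
  qed
  have "f e = (f ^^ (Suc (m - 1))) (Min P)" using e_def by simp
  also have "Suc (m - 1) = m" using m3 by simp
  finally show "f e = Min P" using fmP by simp
  show "f (f (Min P)) \<noteq> Min P"
  proof
    assume h: "f (f (Min P)) = Min P"
    have "(f ^^ (m - j)) (Min P) = (f ^^ (m - j + j)) x0" by (simp only: j(2) funpow_add comp_apply)
    also have "m - j + j = m" using j by simp
    finally have x0e: "(f ^^ (m - j)) (Min P) = x0" using fm by simp
    have "(f ^^ 2) x0 = (f ^^ (2 + (m - j))) (Min P)" by (simp only: funpow_add comp_apply x0e)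
    also have "\<dots> = (f ^^ ((m - j) + 2)) (Min P)" by (simp add: add.commute)
    also have "\<dots> = (f ^^ (m - j)) ((f ^^ 2) (Min P))" by (simp only: funpow_add comp_apply)
    also have "(f ^^ 2) (Min P) = Min P" using h by (simp add: numeral_2_eq_2)
    finally have "(f ^^ 2) x0 = x0" using x0e by simp
    with nper[of 2] m3 show False by simp
  qed
qed

end

context L begin

lemma f2: "(f ^^ 2) x = f (f x)" by (simp add: numeral_2_eq_2)
lemma GSuc: "G (Suc j) x = f (f (G j x))" by (simp add: G_def)

lemma c2: "a \<le> \<alpha> \<Longrightarrow> \<beta> \<le> b \<Longrightarrow> continuous_on {\<alpha>..\<beta>} (f ^^ 2)"
  by (rule continuous_on_subset[OF iter_cont[OF cont maps]]) auto
lemma cf: "a \<le> \<alpha> \<Longrightarrow> \<beta> \<le> b \<Longrightarrow> continuous_on {\<alpha>..\<beta>} f"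
  by (rule continuous_on_subset[OF cont]) auto

lemma basic: "a \<le> Min P" "e \<le> b" "Min P \<le> v" "v < e" "v < z" "z < e" "f (f v) = Min P" "Min P < v"
proof -
  show aM: "a \<le> Min P" using P_facts(3) PI by auto
  have "Min P \<in> {a..b}" using P_facts(3) PI by auto
  then show "e \<le> b" using iter_maps[OF maps] e_def by auto
  show "Min P \<le> v" "v < e" "v < z" "z < e" using v z by auto
  show ffv: "f (f v) = Min P" using fv P_facts(6) by simp
  have "v \<noteq> Min P" using ffv P_facts(7) by auto
  then show "Min P < v" using v by auto
qed

lemma z0_props: "z0 \<in> {v..z}" "f (f z0) = z0" "\<And>y. y \<in> {v..z} \<Longrightarrow> f (f y) = y \<Longrightarrow> z0 \<le> y"
proof -
  have c: "continuous_on {v..z} (f ^^ 2)" using basic by (intro c2) auto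
  have "z \<in> {v..z}" using basic by auto
  moreover have "(f ^^ 2) z = z" using fz by (simp add: f2)
  ultimately have "(LEAST x. x \<in> {v..z} \<and> (f ^^ 2) x = x) \<in> {v..z} \<and> (f ^^ 2) (LEAST x. x \<in> {v..z} \<and> (f ^^ 2) x = x) = (LEAST x. x \<in> {v..z} \<and> (f ^^ 2) x = x) \<and>
    (\<forall>y\<in>{v..z}. (f ^^ 2) y = y \<longrightarrow> (LEAST x. x \<in> {v..z} \<and> (f ^^ 2) x = x) \<le> y)"
    by (rule least_fix[OF c])
  then show "z0 \<in> {v..z}" "f (f z0) = z0" "\<And>y. y \<in> {v..z} \<Longrightarrow> f (f y) = y \<Longrightarrow> z0 \<le> y"
    unfolding z0_def[symmetric] by (auto simp: f2)
qed

lemma vz0: "v < z0" "z0 \<le> z" "z0 < e"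
proof -
  have "z0 \<noteq> v" using z0_props(2) basic(7,8) by auto
  then show "v < z0" using z0_props(1) by auto
  show "z0 \<le> z" using z0_props(1) by auto
  then show "z0 < e" using basic by auto
qed

lemma F2: "y \<in> {v..<z0} \<Longrightarrow> f (f y) < y"
proof (rule ccontr)
  assume y: "y \<in> {v..<z0}" and n: "\<not> f (f y) < y"
  have c: "continuous_on {v..y} (\<lambda>x. (f ^^ 2) x - x)"
    using basic vz0 y by (intro continuous_intros c2) auto
  have "\<exists>c\<in>{v..y}. (f ^^ 2) c - c = 0"
    by (rule ivt[OF c]) (use y n basic in \<open>auto simp: f2\<close>)
  then obtain c where "c \<in> {v..y}" "f (f c) = c" by (auto simp: f2)
  moreover have "c \<in> {v..z}" using \<open>c \<in> {v..y}\<close> y vz0 by auto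
  ultimately have "z0 \<le> c" using z0_props(3) by blast
  with \<open>c \<in> {v..y}\<close> y show False by auto
qed

lemma ex_d: "\<exists>x\<in>{Min P..v}. (f ^^ 2) x = z0"
proof (rule ccontr)
  assume nex: "\<not> ?thesis"
  have lt: "f (f y) < z0" if y: "y \<in> {Min P..<z0}" for y
  proof (cases "y \<le> v")
    case True
    show ?thesis
    proof (rule ccontr)
      assume "\<not> f (f y) < z0"
      have c: "continuous_on {y..v} (f ^^ 2)" using basic y by (intro c2) auto
      have "\<exists>c\<in>{y..v}. (f ^^ 2) c = z0"
        by (rule ivt[OF c]) (use True \<open>\<not> f (f y) < z0\<close> basic vz0 in \<open>auto simp: f2\<close>)
      then obtain c where "c \<in> {y..v}" "(f ^^ 2) c = z0" by blast
      with nex y show False by auto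
    qed
  next
    case False
    then show ?thesis using F2[of y] y by auto
  qed
  have all: "G j (Min P) \<in> P \<and> G j (Min P) < z0" for j
  proof (induction j)
    case 0 then show ?case using P_facts(3) basic vz0 by (simp add: G0)
  next
    case (Suc j)
    then have "f (f (G j (Min P))) \<in> P" using P_facts(5) by blast
    moreover have "f (f (G j (Min P))) < z0" using Suc P_facts(4)[of "G j (Min P)"] by (intro lt) auto
    ultimately show ?case by (simp only: GSuc)
  qed
  have "2 * ((m - 1) div 2) = m - 1" using modd by simp
  then have "e = G ((m - 1) div 2) (Min P)" using e_def by (simp add: G_def)
  with all[of "(m - 1) div 2"] vz0 show False by simp
qed

lemma d_props: "d \<in> {Min P..v}" "f (f d) = z0" "\<And>y. y \<in> {Min P..v} \<Longrightarrow> f (f y) = z0 \<Longrightarrow> y \<le> d"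
proof -
  have c: "continuous_on {Min P..v} (f ^^ 2)" using basic by (intro c2) auto
  from ex_d obtain y0 where "y0 \<in> {Min P..v}" "(f ^^ 2) y0 = z0" by blast
  from greatest_iv[OF c this] show "d \<in> {Min P..v}" "f (f d) = z0" "\<And>y. y \<in> {Min P..v} \<Longrightarrow> f (f y) = z0 \<Longrightarrow> y \<le> d"
    unfolding d_def[symmetric] by (auto simp: f2)
qed

lemma dv: "d < v" "Min P \<le> d" "a \<le> d"
proof -
  have "d \<noteq> v" using d_props(2) basic(7,8) vz0 by auto
  then show "d < v" using d_props(1) by auto
  show "Min P \<le> d" using d_props(1) by auto
  then show "a \<le> d" using basic by auto
qed

lemma F1: "y \<in> {d<..v} \<Longrightarrow> f (f y) < z0"
proof (rule ccontr)
  assume y: "y \<in> {d<..v}" and n: "\<not> f (f y) < z0"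
  have c: "continuous_on {y..v} (f ^^ 2)" using dv y basic by (intro c2) auto
  have "\<exists>c\<in>{y..v}. (f ^^ 2) c = z0"
    by (rule ivt[OF c]) (use y n basic vz0 in \<open>auto simp: f2\<close>)
  then obtain c where "c \<in> {y..v}" "f (f c) = z0" by (auto simp: f2)
  moreover have "c \<in> {Min P..v}" using \<open>c \<in> {y..v}\<close> y dv by auto
  ultimately have "c \<le> d" using d_props(3) by blast
  with \<open>c \<in> {y..v}\<close> y show False by auto
qed

lemma F3: "y \<in> {d<..<z0} \<Longrightarrow> f (f y) < z0"
  using F1[of y] F2[of y] by (cases "y \<le> v") auto

lemma F4: "y \<in> {v..<z0} \<Longrightarrow> y < f y"
proof (rule ccontr)
  assume y: "y \<in> {v..<z0}" and n: "\<not> y < f y"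
  have c: "continuous_on {v..y} (\<lambda>x. f x - x)"
    using basic vz0 y by (intro continuous_intros cf) auto
  have "\<exists>c\<in>{v..y}. f c - c = 0"
    by (rule ivt[OF c]) (use y n basic fv in \<open>auto\<close>)
  then obtain c where "c \<in> {v..y}" "f c = c" by auto
  then have "f (f c) = c" by simp
  moreover have "c \<in> {v..z}" using \<open>c \<in> {v..y}\<close> y vz0 by auto
  ultimately have "z0 \<le> c" using z0_props(3) by blast
  with \<open>c \<in> {v..y}\<close> y show False by auto
qed

lemma F5: "y \<in> {v..<z0} \<Longrightarrow> z0 \<le> f y"
proof (rule ccontr)
  assume y: "y \<in> {v..<z0}" and n: "\<not> z0 \<le> f y"
  have t: "f y \<in> {v..<z0}" using F4[OF y] y n by auto
  have "f y < f (f y)" using F4[OF t] .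
  with F4[OF y] F2[OF y] show False by auto
qed

lemma F6: "y \<in> {d<..v} \<Longrightarrow> z0 \<le> f y"
proof (rule ccontr)
  assume y: "y \<in> {d<..v}" and n: "\<not> z0 \<le> f y"
  show False
  proof (cases "v \<le> f y")
    case True
    then have "f y \<in> {v..<z0}" using n by auto
    then have "z0 \<le> f (f y)" by (rule F5)
    with F1[OF y] show False by auto
  next
    case False
    have c: "continuous_on {y..v} f" using dv y basic by (intro cf) auto
    have "\<exists>c\<in>{y..v}. f c = v"
      by (rule ivt[OF c]) (use y False basic fv in \<open>auto\<close>)
    then obtain c where c: "c \<in> {y..v}" "f c = v" by blast
    then have "f (f c) = e" using fv by simp
    moreover have "c \<in> {d<..v}" using c y by auto
    ultimately show False using F1[of c] vz0 by auto
  qed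
qed

lemma F7: "y \<in> {d<..<z0} \<Longrightarrow> z0 \<le> f y"
  using F5[of y] F6[of y] by (cases "y \<le> v") auto

lemma Gz0: "G n z0 = z0"
  by (induction n) (simp_all add: GSuc G0 z0_props(2))

lemma Gd: "n \<ge> 1 \<Longrightarrow> G n d = z0"
proof -
  assume "n \<ge> 1"
  then obtain n' where "n = Suc n'" by (cases n) auto
  then have "G n d = G n' (G 1 d)" using GG[of n' 1 d] by simp
  also have "G 1 d = z0" using d_props(2) by (simp only: G1)
  finally show ?thesis using Gz0 by simp
qed

end

context L begin

lemma bnds: "a \<le> d" "z0 \<le> b" "v \<le> b" "d < z0" "v < z0"
  using dv basic vz0 by auto

lemma u_props': assumes "\<exists>x\<in>{d..v}. G n x = d"
  shows "u n \<in> {d..v} \<and> G n (u n) = d \<and> (\<forall>y\<in>{d..v}. G n y = d \<longrightarrow> u n \<le> y)"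
proof -
  have c: "continuous_on {d..v} (G n)" using bnds by (intro Gc) auto
  have eq: "u n = (LEAST x. x \<in> {d..v} \<and> G n x = d)" by (simp add: u_def G_def)
  from assms obtain y0 where "y0 \<in> {d..v}" "G n y0 = d" by blast
  from least_iv[OF c this] show ?thesis unfolding eq by simp
qed

lemma u_ex1: "\<exists>x\<in>{d..v}. G 1 x = d"
proof -
  have c: "continuous_on {d..v} (G 1)" using bnds by (intro Gc) auto
  show ?thesis
    by (rule ivt[OF c]) (use Gd[of 1] bnds basic dv in \<open>auto simp: G1 f2\<close>)
qed

lemma u1: "u 1 \<in> {d..v}" "G 1 (u 1) = d" "\<And>y. y \<in> {d..v} \<Longrightarrow> G 1 y = d \<Longrightarrow> u 1 \<le> y"
  using u_props'[OF u_ex1] by auto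

lemma u1_gt: "d < u 1"
proof -
  have "u 1 \<noteq> d" using u1(2) Gd[of 1] bnds by auto
  then show ?thesis using u1(1) by auto
qed

lemma u_step:
  assumes "\<exists>x\<in>{d..v}. G n x = d" "n \<ge> 1"
  shows "\<exists>w\<in>{d..u n}. G (Suc n) w = d \<and> w \<noteq> u n"
proof -
  note un = u_props'[OF assms(1)]
  have c: "continuous_on {d..u n} (G n)" using bnds un by (intro Gc) auto
  have "\<exists>w\<in>{d..u n}. G n w = u 1"
    by (rule ivt[OF c]) (use un Gd[OF assms(2)] u1 bnds in \<open>auto\<close>)
  then obtain w where w: "w \<in> {d..u n}" "G n w = u 1" by blast
  have "G (Suc n) w = G 1 (G n w)" using GG[of 1 n w] by simp
  also have "\<dots> = d" using w u1 by simp
  finally have "G (Suc n) w = d" .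
  moreover have "w \<noteq> u n" using w un u1_gt by auto
  ultimately show ?thesis using w by blast
qed

lemma u_ex: "n \<ge> 1 \<Longrightarrow> \<exists>x\<in>{d..v}. G n x = d"
proof (induction n rule: nat_induct_at_least)
  case base
  show ?case by (rule u_ex1)
next
  case (Suc n)
  from u_step[OF Suc(2) Suc(1)] obtain w where "w \<in> {d..u n}" "G (Suc n) w = d" by blast
  moreover have "u n \<le> v" using u_props'[OF Suc(2)] by auto
  ultimately show ?case by auto
qed

lemma u_props: assumes "n \<ge> 1"
  shows "u n \<in> {d..v}" "G n (u n) = d" "\<And>y. y \<in> {d..v} \<Longrightarrow> G n y = d \<Longrightarrow> u n \<le> y"
  using u_props'[OF u_ex[OF assms]] by auto

lemma u_gt: "n \<ge> 1 \<Longrightarrow> d < u n"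
proof -
  assume n: "n \<ge> 1"
  have "u n \<noteq> d" using u_props(2)[OF n] Gd[OF n] bnds by auto
  then show ?thesis using u_props(1)[OF n] by auto
qed

lemma u_dec: "n \<ge> 1 \<Longrightarrow> u (Suc n) < u n"
proof -
  assume n: "n \<ge> 1"
  from u_step[OF u_ex[OF n] n] obtain w where w: "w \<in> {d..u n}" "G (Suc n) w = d" "w \<noteq> u n" by blast
  have "w \<in> {d..v}" using w u_props(1)[OF n] by auto
  then have "u (Suc n) \<le> w" using u_props(3)[of "Suc n" w] w by auto
  then show ?thesis using w by auto
qed

lemma u_lt: "1 \<le> s \<Longrightarrow> s < t \<Longrightarrow> u t < u s"
proof -
  assume s: "1 \<le> s" and st: "s < t"
  then have "Suc s \<le> t" by simp
  then show ?thesis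
  proof (induction t rule: dec_induct)
    case base then show ?case using u_dec s by simp
  next
    case (step t)
    then show ?case using u_dec[of t] s by simp
  qed
qed

lemma u_le: "1 \<le> s \<Longrightarrow> s \<le> t \<Longrightarrow> u t \<le> u s"
  using u_lt[of s t] by (cases "s = t") auto

lemma Q: "s \<ge> 1 \<Longrightarrow> \<exists>w\<in>{u 1..z0}. G s w = d"
proof -
  assume s: "s \<ge> 1"
  show ?thesis
  proof (cases "s = 1")
    case True
    then show ?thesis using u1 bnds by auto
  next
    case False
    then obtain s' where s': "s = Suc s'" "s' \<ge> 1" using s by (cases s) auto
    have c: "continuous_on {u 1..z0} (G 1)" using bnds u1 by (intro Gc) auto
    have "\<exists>w\<in>{u 1..z0}. G 1 w = u s'"
      by (rule ivt[OF c]) (use u1 u_props[OF s'(2)] Gz0[of 1] bnds u1 in \<open>auto\<close>)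
    then obtain w where w: "w \<in> {u 1..z0}" "G 1 w = u s'" by blast
    have "G s w = G s' (G 1 w)" using GG[of s' 1 w] s' by simp
    also have "\<dots> = d" using w u_props[OF s'(2)] by simp
    finally show ?thesis using w by blast
  qed
qed

end

lemma funpow_fix_mult: "(f ^^ p) x = x \<Longrightarrow> (f ^^ (p * r)) x = x"
proof (induction r)
  case 0 then show ?case by simp
next
  case (Suc r)
  have "(f ^^ (p * Suc r)) x = (f ^^ p) ((f ^^ (p * r)) x)"
    by (simp add: funpow_add algebra_simps)
  then show ?case using Suc by simp
qed

context L begin

lemma hitL: "a \<le> \<alpha> \<Longrightarrow> \<alpha> \<le> \<beta> \<Longrightarrow> \<beta> \<le> b \<Longrightarrow> G t \<alpha> = z0 \<Longrightarrow> G t \<beta> \<le> w \<Longrightarrow> w \<le> z0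
   \<Longrightarrow> \<exists>y\<in>{\<alpha>..\<beta>}. G t y = w"
  by (rule ivt[OF Gc]) auto

lemma hitR: "a \<le> \<alpha> \<Longrightarrow> \<alpha> \<le> \<beta> \<Longrightarrow> \<beta> \<le> b \<Longrightarrow> G t \<beta> = z0 \<Longrightarrow> G t \<alpha> \<le> w \<Longrightarrow> w \<le> z0
   \<Longrightarrow> \<exists>y\<in>{\<alpha>..\<beta>}. G t y = w"
  by (rule ivt[OF Gc]) auto

lemma target: assumes "s \<ge> 1" "G t y \<le> u 1" shows "\<exists>w. G t y \<le> w \<and> w \<le> z0 \<and> G s w = d"
proof -
  obtain w where "w \<in> {u 1..z0}" "G s w = d" using Q[OF assms(1)] by blast
  then show ?thesis using assms(2) by (intro exI[of _ w]) auto
qed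

lemma LA: assumes n: "n \<ge> 1" and x: "x \<in> {d..<u n}" and t: "1 \<le> t" "t \<le> n"
  shows "(t < n \<longrightarrow> u 1 < G t x) \<and> d < G t x"
proof -
  have un: "u n \<in> {d..v}" "\<And>y. y \<in> {d..v} \<Longrightarrow> G n y = d \<Longrightarrow> u n \<le> y" using u_props[OF n] by auto
  have Gtd: "G t d = z0" using Gd t by simp
  have key: False if w: "G t x \<le> w" "w \<le> z0" "G (n - t) w = d" for w
  proof -
    have "\<exists>y\<in>{d..x}. G t y = w"
    proof (rule hitL)
      show "a \<le> d" "d \<le> x" "G t d = z0" "G t x \<le> w" "w \<le> z0" using bnds x Gtd w by auto
      show "x \<le> b" using x un bnds by auto
    qed
    then obtain y where y: "y \<in> {d..x}" "G t y = w" by blast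
    have "G n y = G (n - t) (G t y)" using Gsplit t by simp
    then have "G n y = d" using y w by simp
    moreover have "y \<in> {d..v}" using y x un by auto
    ultimately have "u n \<le> y" using un by blast
    then show False using y x by auto
  qed
  have A1: "u 1 < G t x" if tn: "t < n"
  proof (rule ccontr)
    assume "\<not> u 1 < G t x"
    then have "G t x \<le> u 1" by simp
    moreover have "1 \<le> n - t" using tn by simp
    ultimately obtain w where "G t x \<le> w" "w \<le> z0" "G (n - t) w = d" using target by blast
    then show False using key by blast
  qed
  have "d < G t x"
  proof (cases "t < n")
    case True then show ?thesis using A1 u1_gt by force
  next
    case False
    then have "t = n" using t by simp
    show ?thesis
    proof (rule ccontr)
      assume "\<not> d < G t x"
      then show False using key[of d] \<open>t = n\<close> bnds by (simp add: G0)
    qed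
  qed
  then show ?thesis using A1 by blast
qed

lemma u'_ex: assumes n: "n \<ge> 1" and k: "k \<ge> 1" shows "\<exists>x\<in>{u (n+1)..u n}. G (n + k) x = d"
proof (cases "k = 1")
  case True
  then show ?thesis using u_props[of "n+1"] u_dec[OF n] by force
next
  case False
  then obtain k' where k': "k = Suc k'" "k' \<ge> 1" using k by (cases k) auto
  have n1: "n + 1 \<ge> 1" by simp
  have a1: "G (n+1) (u n) = z0" using Gsplit[of n "n+1" "u n"] u_props(2)[OF n] Gd[of 1] by simp
  have "\<exists>y\<in>{u (n+1)..u n}. G (n+1) y = u k'"
    by (rule ivt[OF Gc]) (use u_props[OF n1] u_props[OF n] u_dec[OF n] u_props[OF k'(2)] bnds a1 in auto)
  then obtain y where y: "y \<in> {u (n+1)..u n}" "G (n+1) y = u k'" by blast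
  have "G (n + k) y = G k' (G (n+1) y)" using Gsplit[of "n+1" "n+k" y] k' by simp
  also have "\<dots> = d" using y u_props[OF k'(2)] by simp
  finally show ?thesis using y by blast
qed

lemma u'_props: assumes n: "n \<ge> 1" and k: "k \<ge> 1"
  shows "u' n k \<in> {u (n+1)..u n}" "G (n+k) (u' n k) = d"
    "\<And>y. y \<in> {u (n+1)..u n} \<Longrightarrow> G (n+k) y = d \<Longrightarrow> y \<le> u' n k"
proof -
  have eq: "u' n k = (GREATEST x. x \<in> {u (n + 1)..u n} \<and> G (n+k) x = d)"
    unfolding u'_def by (simp add: G_def distrib_left)
  have n1: "n + 1 \<ge> 1" by simp
  have c: "continuous_on {u (n+1)..u n} (G (n+k))" using u_props[OF n] u_props[OF n1] bnds by (intro Gc) auto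
  from u'_ex[OF n k] obtain y0 where "y0 \<in> {u (n+1)..u n}" "G (n+k) y0 = d" by blast
  from greatest_iv[OF c this] show "u' n k \<in> {u (n+1)..u n}" "G (n+k) (u' n k) = d"
    "\<And>y. y \<in> {u (n+1)..u n} \<Longrightarrow> G (n+k) y = d \<Longrightarrow> y \<le> u' n k"
    unfolding eq by auto
qed

lemma u'_lt: assumes n: "n \<ge> 1" and k: "k \<ge> 1" shows "u' n k < u n"
proof -
  have "G (n+k) (u n) = z0" using Gsplit[of n "n+k" "u n"] u_props(2)[OF n] Gd[OF k] by simp
  then have "u' n k \<noteq> u n" using u'_props(2)[OF n k] bnds by auto
  then show ?thesis using u'_props(1)[OF n k] by auto
qed

lemma u'_inc: assumes n: "n \<ge> 1" and k: "k \<ge> 1" shows "u' n k < u' n (Suc k)"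
proof -
  have n1: "n + 1 \<ge> 1" by simp
  have k1: "Suc k \<ge> 1" by simp
  have a1: "G (n+k) (u n) = z0" using Gsplit[of n "n+k" "u n"] u_props(2)[OF n] Gd[OF k] by simp
  have "\<exists>y\<in>{u' n k..u n}. G (n+k) y = u 1"
  proof (rule ivt[OF Gc])
    show "a \<le> u' n k" using u'_props(1)[OF n k] u_gt[OF n1] bnds by auto
    show "u n \<le> b" using u_props(1)[OF n] bnds by auto
    show "u' n k \<le> u n" using u'_props(1)[OF n k] by auto
    show "G (n + k) (u' n k) \<le> u 1 \<and> u 1 \<le> G (n + k) (u n) \<or> G (n + k) (u n) \<le> u 1 \<and> u 1 \<le> G (n + k) (u' n k)"
      using u'_props(2)[OF n k] a1 u1 bnds by auto
  qed
  then obtain y where y: "y \<in> {u' n k..u n}" "G (n+k) y = u 1" by blast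
  have "G (n + Suc k) y = G 1 (G (n+k) y)" using GG[of 1 "n+k" y] by simp
  also have "\<dots> = d" using y u1 by simp
  finally have "y \<le> u' n (Suc k)" using u'_props(3)[OF n k1, of y] y u'_props(1)[OF n k] by auto
  moreover have "y \<noteq> u' n k" using y u'_props(2)[OF n k] u1_gt by auto
  ultimately show ?thesis using y by auto
qed

lemma LB: assumes n: "n \<ge> 1" and k: "k \<ge> 1" and x: "x \<in> {u' n k<..u n}" and t: "n < t" "t \<le> n + k"
  shows "(t < n + k \<longrightarrow> u 1 < G t x) \<and> d < G t x"
proof -
  have Gtu: "G t (u n) = z0" using Gsplit[of n t "u n"] u_props(2)[OF n] Gd[of "t - n"] t by simp
  have key: False if w: "G t x \<le> w" "w \<le> z0" "G (n + k - t) w = d" for w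
  proof -
    have "\<exists>y\<in>{x..u n}. G t y = w"
    proof (rule hitR)
      show "a \<le> x" using bnds x u'_props(1)[OF n k] u_gt[of "n+1"] by auto
      show "x \<le> u n" "G t (u n) = z0" "G t x \<le> w" "w \<le> z0" using x Gtu w by auto
      show "u n \<le> b" using u_props(1)[OF n] bnds by auto
    qed
    then obtain y where y: "y \<in> {x..u n}" "G t y = w" by blast
    have "G (n+k) y = G (n + k - t) (G t y)" using Gsplit t by simp
    then have "G (n+k) y = d" using y w by simp
    moreover have "y \<in> {u (n+1)..u n}" using y x u'_props[OF n k] by auto
    ultimately have "y \<le> u' n k" using u'_props(3)[OF n k] by blast
    then show False using y x by auto
  qed
  have A1: "u 1 < G t x" if tn: "t < n + k"
  proof (rule ccontr)
    assume "\<not> u 1 < G t x"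
    then have "G t x \<le> u 1" by simp
    moreover have "1 \<le> n + k - t" using tn by simp
    ultimately obtain w where "G t x \<le> w" "w \<le> z0" "G (n + k - t) w = d" using target by blast
    then show False using key by blast
  qed
  have "d < G t x"
  proof (cases "t < n + k")
    case True then show ?thesis using A1 u1_gt by force
  next
    case False
    then have "t = n + k" using t by simp
    show ?thesis
    proof (rule ccontr)
      assume "\<not> d < G t x"
      then show False using key[of d] \<open>t = n + k\<close> bnds by (simp add: G0)
    qed
  qed
  then show ?thesis using A1 by blast
qed

end

context L begin

lemma uu_ex: assumes n: "n \<ge> 1" and k: "k \<ge> 1" and i: "i \<ge> 1"
  shows "\<exists>x\<in>{u' n k..u' n (Suc k)}. G (n + k + i) x = d"
proof -
  have k1: "Suc k \<ge> 1" by simp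
  have n1: "n + 1 \<ge> 1" by simp
  have inc: "u' n k < u' n (Suc k)" by (rule u'_inc[OF n k])
  have le: "u' n (Suc k) \<le> u n" using u'_props(1)[OF n k1] by auto
  define w where "w = G (n + k) (u' n (Suc k))"
  have dw: "d < w" using LB[OF n k, of "u' n (Suc k)" "n + k"] inc le k n unfolding w_def by auto
  have "G 1 w = G (n + Suc k) (u' n (Suc k))" unfolding w_def using GG[of 1 "n+k"] by simp
  then have g1w: "G 1 w = d" using u'_props(2)[OF n k1] by simp
  have u1w: "u 1 \<le> w"
  proof (rule ccontr)
    assume "\<not> u 1 \<le> w"
    then have "w \<in> {d..v}" using dw u1(1) by auto
    then have "u 1 \<le> w" using u1(3) g1w by blast
    with \<open>\<not> u 1 \<le> w\<close> show False by simp
  qed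
  have uiw: "u i \<le> w" using u_le[of 1 i] i u1w by simp
  have "\<exists>y\<in>{u' n k..u' n (Suc k)}. G (n+k) y = u i"
  proof (rule ivt[OF Gc])
    show "a \<le> u' n k" using u'_props(1)[OF n k] u_gt[OF n1] bnds by auto
    show "u' n (Suc k) \<le> b" using le u_props(1)[OF n] bnds by auto
    show "u' n k \<le> u' n (Suc k)" using inc by simp
    show "G (n + k) (u' n k) \<le> u i \<and> u i \<le> G (n + k) (u' n (Suc k)) \<or> G (n + k) (u' n (Suc k)) \<le> u i \<and> u i \<le> G (n + k) (u' n k)"
      using u'_props(2)[OF n k] uiw u_props(1)[OF i] unfolding w_def by auto
  qed
  then obtain y where y: "y \<in> {u' n k..u' n (Suc k)}" "G (n+k) y = u i" by blast
  have "G (n + k + i) y = G i (G (n + k) y)" using Gsplit[of "n+k" "n+k+i" y] by simp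
  also have "\<dots> = d" using y u_props(2)[OF i] by simp
  finally show ?thesis using y by blast
qed

lemma uu_props: assumes n: "n \<ge> 1" and k: "k \<ge> 1" and i: "i \<ge> 1"
  shows "uu n k i \<in> {u' n k..u' n (Suc k)}" "G (n+k+i) (uu n k i) = d"
    "\<And>y. y \<in> {u' n k..u' n (Suc k)} \<Longrightarrow> G (n+k+i) y = d \<Longrightarrow> uu n k i \<le> y"
proof -
  have eq: "uu n k i = (LEAST x. x \<in> {u' n k..u' n (Suc k)} \<and> G (n+k+i) x = d)"
    unfolding uu_def by (simp add: G_def distrib_left)
  have k1: "Suc k \<ge> 1" by simp
  have n1: "n + 1 \<ge> 1" by simp
  have c: "continuous_on {u' n k..u' n (Suc k)} (G (n+k+i))"
    using u'_props(1)[OF n k] u'_props(1)[OF n k1] u_gt[OF n1] u_props(1)[OF n] bnds by (intro Gc) auto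
  from uu_ex[OF n k i] obtain y0 where "y0 \<in> {u' n k..u' n (Suc k)}" "G (n+k+i) y0 = d" by blast
  from least_iv[OF c this] show "uu n k i \<in> {u' n k..u' n (Suc k)}" "G (n+k+i) (uu n k i) = d"
    "\<And>y. y \<in> {u' n k..u' n (Suc k)} \<Longrightarrow> G (n+k+i) y = d \<Longrightarrow> uu n k i \<le> y"
    unfolding eq by auto
qed

lemma LC: assumes n: "n \<ge> 1" and k: "k \<ge> 1" and i: "i \<ge> 1" and x: "x \<in> {u' n k..<uu n k i}"
    and t: "n + k < t" "t \<le> n + k + i"
  shows "(t < n + k + i \<longrightarrow> u 1 < G t x) \<and> d < G t x"
proof -
  have k1: "Suc k \<ge> 1" by simp
  have n1: "n + 1 \<ge> 1" by simp
  have Gtu: "G t (u' n k) = z0"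
    using Gsplit[of "n+k" t "u' n k"] u'_props(2)[OF n k] Gd[of "t - (n+k)"] t by simp
  have xb: "x \<le> u' n (Suc k)" using x uu_props(1)[OF n k i] by auto
  have key: False if w: "G t x \<le> w" "w \<le> z0" "G (n + k + i - t) w = d" for w
  proof -
    have "\<exists>y\<in>{u' n k..x}. G t y = w"
    proof (rule hitL)
      show "a \<le> u' n k" using u'_props(1)[OF n k] u_gt[OF n1] bnds by auto
      show "x \<le> b" using xb u'_props(1)[OF n k1] u_props(1)[OF n] bnds by auto
      show "u' n k \<le> x" "G t (u' n k) = z0" "G t x \<le> w" "w \<le> z0" using x Gtu w by auto
    qed
    then obtain y where y: "y \<in> {u' n k..x}" "G t y = w" by blast
    have "G (n+k+i) y = G (n + k + i - t) (G t y)" using Gsplit t by simp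
    then have "G (n+k+i) y = d" using y w by simp
    moreover have "y \<in> {u' n k..u' n (Suc k)}" using y xb by auto
    ultimately have "uu n k i \<le> y" using uu_props(3)[OF n k i] by blast
    then show False using y x by auto
  qed
  have A1: "u 1 < G t x" if tn: "t < n + k + i"
  proof (rule ccontr)
    assume "\<not> u 1 < G t x"
    then have "G t x \<le> u 1" by simp
    moreover have "1 \<le> n + k + i - t" using tn by simp
    ultimately obtain w where "G t x \<le> w" "w \<le> z0" "G (n + k + i - t) w = d" using target by blast
    then show False using key by blast
  qed
  have "d < G t x"
  proof (cases "t < n + k + i")
    case True then show ?thesis using A1 u1_gt by force
  next
    case False
    then have "t = n + k + i" using t by simp
    show ?thesis
    proof (rule ccontr)
      assume "\<not> d < G t x"
      then show False using key[of d] \<open>t = n + k + i\<close> bnds by (simp add: G0)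
    qed
  qed
  then show ?thesis using A1 by blast
qed

lemma notper: assumes "G M x = d" "(f ^^ p) x = x" "0 < p" shows "x = z0"
proof -
  have s: "G (Suc M) x = z0" using GG[of 1 M x] assms(1) Gd[of 1] by simp
  have "1 * Suc M \<le> p * Suc M" by (rule mult_le_mono1) (use assms(3) in simp)
  then have le: "Suc M \<le> p * Suc M" by simp
  have "G (p * Suc M) x = G (p * Suc M - Suc M) (G (Suc M) x)" by (rule Gsplit[OF le])
  then have z: "G (p * Suc M) x = z0" using s Gz0 by simp
  have "G (p * Suc M) x = (f ^^ (p * (2 * Suc M))) x" unfolding G_def by (simp add: algebra_simps)
  also have "\<dots> = x" by (rule funpow_fix_mult[OF assms(2)])
  finally show ?thesis using z by simp
qed

lemma main:
  assumes n: "n \<ge> 1" and k: "k \<ge> 1" and i: "i \<ge> 1" and x: "x \<in> {u' n k..uu n k i}"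
    and lp: "least_period_point f p x"
  shows "(odd p \<longrightarrow> p > 2 * n + 2 * k + 2 * i + 1) \<and>
           (even p \<and> p \<le> 2 * n + 2 * k + 2 * i \<longrightarrow> p \<in> {2 * n + 2 * k + 2 * i, 2 * n + 2 * k, 2 * n})"
proof -
  have p0: "0 < p" and fp: "(f ^^ p) x = x" using lp unfolding least_period_point_def by auto
  have k1: "Suc k \<ge> 1" by simp
  have n1: "n + 1 \<ge> 1" by simp
  have xin: "u' n k \<le> x" "x \<le> uu n k i" using x by auto
  have uuin: "uu n k i \<le> u' n (Suc k)" using uu_props(1)[OF n k i] by auto
  have xun: "x < u n" using xin uuin u'_lt[OF n k1] by auto
  have xd: "d < x" using xin u'_props(1)[OF n k] u_gt[OF n1] by auto
  have xv: "x \<le> v" using xun u_props(1)[OF n] by auto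
  have x1: "x < u 1" using xun u_le[of 1 n] n by simp
  have ne1: "x \<noteq> u' n k"
  proof
    assume "x = u' n k"
    then have "x = z0" using notper[OF _ fp p0, of "n + k"] u'_props(2)[OF n k] by simp
    then show False using xv bnds by simp
  qed
  have ne2: "x \<noteq> uu n k i"
  proof
    assume "x = uu n k i"
    then have "x = z0" using notper[OF _ fp p0, of "n + k + i"] uu_props(2)[OF n k i] by simp
    then show False using xv bnds by simp
  qed
  have xA: "x \<in> {d..<u n}" using xd xun by simp
  have xB: "x \<in> {u' n k<..u n}" using xin ne1 xun by simp
  have xC: "x \<in> {u' n k..<uu n k i}" using xin ne2 by simp
  have H: "d < G t x" if "1 \<le> t" "t \<le> n + k + i" for t
  proof -
    consider "t \<le> n" | "n < t \<and> t \<le> n + k" | "n + k < t" by linarith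
    then show ?thesis
    proof cases
      case 1 then show ?thesis using LA[OF n xA] that by blast
    next
      case 2 then show ?thesis using LB[OF n k xB] by blast
    next
      case 3 then show ?thesis using LC[OF n k i xC] that by blast
    qed
  qed
  have H2: "G t x \<in> {d<..<z0}" if "t \<le> n + k + i" for t
    using that
  proof (induction t)
    case 0 then show ?case using xd xv bnds by (simp add: G0)
  next
    case (Suc t)
    then have "G t x \<in> {d<..<z0}" by simp
    then have "f (f (G t x)) < z0" by (rule F3)
    moreover have "d < G (Suc t) x" using H[of "Suc t"] Suc(2) by simp
    ultimately show ?case by (simp add: GSuc)
  qed
  have odd_part: "p > 2 * n + 2 * k + 2 * i + 1" if op: "odd p"
  proof (rule ccontr)
    assume np: "\<not> p > 2 * n + 2 * k + 2 * i + 1"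
    obtain s where ps: "p = Suc (2 * s)" using op oddE by (metis Suc_eq_plus1)
    have sb: "s \<le> n + k + i" using ps np by simp
    have "x = f ((f ^^ (2 * s)) x)" using fp ps by simp
    also have "(f ^^ (2 * s)) x = G s x" by (simp add: G_def)
    finally have xe: "x = f (G s x)" .
    have "z0 \<le> f (G s x)" using H2[OF sb] by (rule F7)
    with xe xv bnds show False by simp
  qed
  have even_part: "p \<in> {2 * n + 2 * k + 2 * i, 2 * n + 2 * k, 2 * n}"
    if ep: "even p" and pb: "p \<le> 2 * n + 2 * k + 2 * i"
  proof -
    obtain q where pq: "p = 2 * q" using ep by blast
    have q1: "1 \<le> q" using pq p0 by simp
    have qb: "q \<le> n + k + i" using pq pb by simp
    have Gq: "G q x = x" using fp pq by (simp add: G_def)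
    have "q = n \<or> q = n + k \<or> q = n + k + i"
    proof (rule ccontr)
      assume nq: "\<not> ?thesis"
      consider "q < n" | "n < q \<and> q < n + k" | "n + k < q \<and> q < n + k + i"
        using nq qb by linarith
      then have "u 1 < G q x"
      proof cases
        case 1 then show ?thesis using LA[OF n xA q1] by simp
      next
        case 2 then show ?thesis using LB[OF n k xB, of q] by simp
      next
        case 3 then show ?thesis using LC[OF n k i xC, of q] by simp
      qed
      with Gq x1 show False by simp
    qed
    then show ?thesis using pq by auto
  qed
  show ?thesis using odd_part even_part by blast
qed

end

theorem lemma12:
  fixes f :: "real \<Rightarrow> real" and a b :: real and m :: nat and P :: "real set"
    and v z :: real
  assumes ab: "a \<le> b"
    and cont: "continuous_on {a..b} f"
    and maps: "f ` {a..b} \<subseteq> {a..b}"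
    and m3: "m \<ge> 3" and modd: "odd m"
    and orb: "periodic_orbit f m P" and PI: "P \<subseteq> {a..b}"
  defines "e \<equiv> (f ^^ (m - 1)) (Min P)"
  assumes v: "v \<in> {Min P..<e}" and fv: "f v = e"
    and z: "z \<in> {v<..<e}" and fz: "f z = z"
  defines "z0 \<equiv> LEAST x. x \<in> {v..z} \<and> (f ^^ 2) x = x"
  defines "d \<equiv> GREATEST x. x \<in> {Min P..v} \<and> (f ^^ 2) x = z0"
  defines "u \<equiv> (\<lambda>n::nat. LEAST x. x \<in> {d..v} \<and> (f ^^ (2 * n)) x = d)"
  defines "u' \<equiv> (\<lambda>n k::nat. GREATEST x. x \<in> {u (n + 1)..u n} \<and> (f ^^ (2 * n + 2 * k)) x = d)"
  defines "uu \<equiv> (\<lambda>n k i::nat. LEAST x. x \<in> {u' n k..u' n (k + 1)} \<and>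
                                   (f ^^ (2 * n + 2 * k + 2 * i)) x = d)"
  shows "\<forall>n k i p x. n \<ge> 1 \<and> k \<ge> 1 \<and> i \<ge> 1 \<and> x \<in> {u' n k..uu n k i} \<and> least_period_point f p x \<longrightarrow>
           (odd p \<longrightarrow> p > 2 * n + 2 * k + 2 * i + 1) \<and>
           (even p \<and> p \<le> 2 * n + 2 * k + 2 * i \<longrightarrow>
              p \<in> {2 * n + 2 * k + 2 * i, 2 * n + 2 * k, 2 * n})"
proof -
  interpret L f a b m P v z e z0 d u u' uu
    by unfold_locales (use assms in \<open>simp_all add: e_def z0_def d_def u_def u'_def uu_def\<close>)
  show ?thesis
  proof (intro allI impI)
    fix n k i p x
    assume h: "n \<ge> 1 \<and> k \<ge> 1 \<and> i \<ge> 1 \<and> x \<in> {u' n k..uu n k i} \<and> least_period_point f p x"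
    show "(odd p \<longrightarrow> p > 2 * n + 2 * k + 2 * i + 1) \<and>
           (even p \<and> p \<le> 2 * n + 2 * k + 2 * i \<longrightarrow>
              p \<in> {2 * n + 2 * k + 2 * i, 2 * n + 2 * k, 2 * n})"
      using main[of n k i x p] h by blast
  qed
qed

end
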